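(* For all integers $n\geq2$, $\|W_n^+-W_n^-\|_{\mathrm{cb}}=2$.
   Context: The Holevo–Werner channels on $M_n(\mathbb{C})$ are $W_n^+(x)=\frac{1}{n+1}(\mathrm{Tr}_n(x)1_n+x^t)$ and $W_n^-(x)=\frac{1}{n-1}(\mathrm{Tr}_n(x)1_n-x^t)$, where $\mathrm{Tr}_n$ is the non-normalized trace and $x^t$ the transpose; $\|\cdot\|_{\mathrm{cb}}$ is the completely bounded norm. *)

theory Defs
  imports Complex_Main "HOL-Library.Extended_Real"
begin

text \<open>Complex matrices of size d x d are represented as functions nat => nat => complex,
  of which only the entries with indices < d are meaningful.\<close>
type_synonym cmatrix = "nat \<Rightarrow> nat \<Rightarrow> complex"

definition mat_op_norm :: "nat \<Rightarrow> cmatrix \<Rightarrow> real" where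
  "mat_op_norm d A = Sup {sqrt (\<Sum>i<d. (cmod (\<Sum>j<d. A i j * x j))\<^sup>2) | x :: nat \<Rightarrow> complex.
                           (\<Sum>j<d. (cmod (x j))\<^sup>2) \<le> 1}"

definition mtrace :: "nat \<Rightarrow> cmatrix \<Rightarrow> complex" where
  "mtrace n x = (\<Sum>i<n. x i i)"

definition HW_plus :: "nat \<Rightarrow> cmatrix \<Rightarrow> cmatrix" where
  "HW_plus n x = (\<lambda>i j. (mtrace n x * (if i = j then 1 else 0) + x j i) / (of_nat n + 1))"

definition HW_minus :: "nat \<Rightarrow> cmatrix \<Rightarrow> cmatrix" where
  "HW_minus n x = (\<lambda>i j. (mtrace n x * (if i = j then 1 else 0) - x j i) / (of_nat n - 1))"

text \<open>Amplification id_k \<otimes> Phi : M_k(M_n) -> M_k(M_n), where M_k(M_n) is identified with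
  M_{kn}(C); block (a,b) consists of the entries with row a*n+i and column b*n+j (i,j < n).\<close>
definition ampl :: "nat \<Rightarrow> (cmatrix \<Rightarrow> cmatrix) \<Rightarrow> cmatrix \<Rightarrow> cmatrix" where
  "ampl n Phi X = (\<lambda>p q. Phi (\<lambda>i j. if i < n \<and> j < n then X (p div n * n + i) (q div n * n + j) else 0)
                           (p mod n) (q mod n))"

definition ampl_norm :: "nat \<Rightarrow> nat \<Rightarrow> (cmatrix \<Rightarrow> cmatrix) \<Rightarrow> real" where
  "ampl_norm k n Phi = Sup {mat_op_norm (k * n) (ampl n Phi X) | X. mat_op_norm (k * n) X \<le> 1}"

definition cb_norm :: "nat \<Rightarrow> (cmatrix \<Rightarrow> cmatrix) \<Rightarrow> ereal" where
  "cb_norm n Phi = (SUP k\<in>{1..}. ereal (ampl_norm k n Phi))"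

end

theory Submission
  imports Defs "HOL-Analysis.Analysis"
begin


definition norm2 :: "nat \<Rightarrow> (nat \<Rightarrow> complex) \<Rightarrow> real" where
  "norm2 d z = (\<Sum>j<d. (cmod (z j))\<^sup>2)"
definition mv :: "nat \<Rightarrow> cmatrix \<Rightarrow> (nat \<Rightarrow> complex) \<Rightarrow> nat \<Rightarrow> complex" where
  "mv d A z = (\<lambda>i. \<Sum>j<d. A i j * z j)"

lemma mat_op_norm_alt: "mat_op_norm d A = Sup {sqrt (norm2 d (mv d A x)) | x. norm2 d x \<le> 1}"
  unfolding mat_op_norm_def norm2_def mv_def by simp

lemma norm2_nonneg[simp]: "norm2 d z \<ge> 0"
  unfolding norm2_def by (simp add: sum_nonneg)

lemma reindex: fixes f :: "nat \<Rightarrow> 'a::comm_monoid_add" shows "(\<Sum>p<k*n. f p) = (\<Sum>a<k. \<Sum>m<n. f (a*n+m))"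
proof -
  have "(\<Sum>p<k*n. f p) = (\<Sum>a<k. sum f {a*n..<a*n+n})"
    using sum.nat_group[of f n k] by simp
  also have "\<dots> = (\<Sum>a<k. \<Sum>m<n. f (a*n+m))"
    by (rule sum.cong[OF refl]) (simp add: sum.atLeastLessThan_shift_0[of f] atLeast0LessThan comp_def)
  finally show ?thesis .
qed

lemma CS_c:
  fixes a b :: "'i \<Rightarrow> complex"
  shows "cmod (\<Sum>j\<in>S. a j * b j) \<le> sqrt (\<Sum>j\<in>S. (cmod (a j))\<^sup>2) * sqrt (\<Sum>j\<in>S. (cmod (b j))\<^sup>2)"
proof -
  have "cmod (\<Sum>j\<in>S. a j * b j) \<le> (\<Sum>j\<in>S. cmod (a j) * cmod (b j))"
    by (rule order_trans[OF norm_sum]) (simp add: norm_mult)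
  also have "\<dots> \<le> sqrt (\<Sum>j\<in>S. (cmod (a j))\<^sup>2) * sqrt (\<Sum>j\<in>S. (cmod (b j))\<^sup>2)"
  proof -
    have "(\<Sum>j\<in>S. cmod (a j) * cmod (b j))\<^sup>2 \<le> (\<Sum>j\<in>S. (cmod (a j))\<^sup>2) * (\<Sum>j\<in>S. (cmod (b j))\<^sup>2)"
      by (rule Cauchy_Schwarz_ineq_sum)
    then have "sqrt ((\<Sum>j\<in>S. cmod (a j) * cmod (b j))\<^sup>2) \<le> sqrt ((\<Sum>j\<in>S. (cmod (a j))\<^sup>2) * (\<Sum>j\<in>S. (cmod (b j))\<^sup>2))"
      using real_sqrt_le_mono by blast
    then show ?thesis by (simp add: real_sqrt_mult sum_nonneg)
  qed
  finally show ?thesis .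
qed

lemma CS_r:
  fixes a b :: "'i \<Rightarrow> real"
  assumes "\<And>j. a j \<ge> 0" "\<And>j. b j \<ge> 0"
  shows "(\<Sum>j\<in>S. sqrt (a j) * sqrt (b j)) \<le> sqrt (\<Sum>j\<in>S. a j) * sqrt (\<Sum>j\<in>S. b j)"
proof -
  have "(\<Sum>j\<in>S. sqrt (a j) * sqrt (b j))\<^sup>2 \<le> (\<Sum>j\<in>S. (sqrt (a j))\<^sup>2) * (\<Sum>j\<in>S. (sqrt (b j))\<^sup>2)"
    by (rule Cauchy_Schwarz_ineq_sum)
  also have "\<dots> = (\<Sum>j\<in>S. a j) * (\<Sum>j\<in>S. b j)" using assms by simp
  finally have "sqrt ((\<Sum>j\<in>S. sqrt (a j) * sqrt (b j))\<^sup>2) \<le> sqrt ((\<Sum>j\<in>S. a j) * (\<Sum>j\<in>S. b j))"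
    using real_sqrt_le_mono by blast
  then show ?thesis using assms by (simp add: real_sqrt_mult sum_nonneg)
qed

lemma mv_bound: "norm2 d (mv d A x) \<le> (\<Sum>i<d. \<Sum>j<d. (cmod (A i j))\<^sup>2) * norm2 d x"
proof -
  have "norm2 d (mv d A x) = (\<Sum>i<d. (cmod (\<Sum>j<d. A i j * x j))\<^sup>2)" by (simp add: norm2_def mv_def)
  also have "\<dots> \<le> (\<Sum>i<d. (\<Sum>j<d. (cmod (A i j))\<^sup>2) * norm2 d x)"
  proof (rule sum_mono)
    fix i
    have "cmod (\<Sum>j<d. A i j * x j) \<le> sqrt (\<Sum>j<d. (cmod (A i j))\<^sup>2) * sqrt (norm2 d x)"
      unfolding norm2_def by (rule CS_c)
    then have "(cmod (\<Sum>j<d. A i j * x j))\<^sup>2 \<le> (sqrt (\<Sum>j<d. (cmod (A i j))\<^sup>2) * sqrt (norm2 d x))\<^sup>2"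
      by (simp add: power_mono)
    also have "\<dots> = (\<Sum>j<d. (cmod (A i j))\<^sup>2) * norm2 d x"
      by (simp add: power_mult_distrib sum_nonneg)
    finally show "(cmod (\<Sum>j<d. A i j * x j))\<^sup>2 \<le> (\<Sum>j<d. (cmod (A i j))\<^sup>2) * norm2 d x" .
  qed
  also have "\<dots> = (\<Sum>i<d. \<Sum>j<d. (cmod (A i j))\<^sup>2) * norm2 d x" by (simp add: sum_distrib_right)
  finally show ?thesis .
qed

lemma opset_bdd: "bdd_above {sqrt (norm2 d (mv d A x)) | x. norm2 d x \<le> 1}"
proof -
  let ?H = "(\<Sum>i<d. \<Sum>j<d. (cmod (A i j))\<^sup>2)"
  have H: "?H \<ge> 0" by (simp add: sum_nonneg)
  show ?thesis
  proof (rule bdd_aboveI, safe)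
    fix x assume x: "norm2 d x \<le> 1"
    have "norm2 d (mv d A x) \<le> ?H * norm2 d x" by (rule mv_bound)
    also have "\<dots> \<le> ?H" using H x by (simp add: mult_left_le)
    finally show "sqrt (norm2 d (mv d A x)) \<le> sqrt ?H" by simp
  qed
qed

lemma op_le: assumes "c \<ge> 0" "\<And>v. norm2 d (mv d A v) \<le> c\<^sup>2 * norm2 d v"
  shows "mat_op_norm d A \<le> c"
  unfolding mat_op_norm_alt
proof (rule cSup_least)
  show "{sqrt (norm2 d (mv d A x)) |x. norm2 d x \<le> 1} \<noteq> {}"
  proof -
    have "norm2 d (\<lambda>_. 0) \<le> 1" by (simp add: norm2_def)
    then show ?thesis by blast
  qed
next
  fix y assume "y \<in> {sqrt (norm2 d (mv d A x)) |x. norm2 d x \<le> 1}"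
  then obtain x where y: "y = sqrt (norm2 d (mv d A x))" and x: "norm2 d x \<le> 1" by blast
  have "norm2 d (mv d A x) \<le> c\<^sup>2 * norm2 d x" by (rule assms(2))
  also have "\<dots> \<le> c\<^sup>2" using x by (simp add: mult_left_le)
  finally show "y \<le> c" using y assms(1) real_le_lsqrt by auto
qed

lemma op_ge: assumes "norm2 d x \<le> 1" shows "sqrt (norm2 d (mv d A x)) \<le> mat_op_norm d A"
  unfolding mat_op_norm_alt by (rule cSup_upper[OF _ opset_bdd]) (use assms in blast)

lemma norm2_scale: "norm2 d (\<lambda>j. c * z j) = (cmod c)\<^sup>2 * norm2 d z"
  by (simp add: norm2_def norm_mult power_mult_distrib sum_distrib_left)

lemma mv_scale: "mv d A (\<lambda>j. c * z j) = (\<lambda>i. c * mv d A z i)"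
  by (simp add: mv_def sum_distrib_left algebra_simps)

lemma op_use: assumes "mat_op_norm d A \<le> 1" shows "norm2 d (mv d A z) \<le> norm2 d z"
proof (cases "norm2 d z = 0")
  case True
  then have "\<forall>j\<in>{..<d}. (cmod (z j))\<^sup>2 = 0" unfolding norm2_def
    by (subst sum_nonneg_eq_0_iff[symmetric]) auto
  then have "\<forall>j<d. z j = 0" by auto
  then have "mv d A z = (\<lambda>_. 0)" by (simp add: mv_def)
  then show ?thesis by (simp add: norm2_def sum_nonneg)
next
  case False
  then have pos: "norm2 d z > 0" using norm2_nonneg[of d z] by linarith
  define s where "s = sqrt (norm2 d z)"
  have s: "s > 0" "s\<^sup>2 = norm2 d z" using pos by (auto simp: s_def)
  define x where "x = (\<lambda>j. complex_of_real (1/s) * z j)"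
  have "norm2 d x = (cmod (complex_of_real (1/s)))\<^sup>2 * norm2 d z" unfolding x_def by (rule norm2_scale)
  then have "norm2 d x = 1" using s pos by (simp add: norm_divide power_divide)
  then have "sqrt (norm2 d (mv d A x)) \<le> mat_op_norm d A" by (intro op_ge) simp
  then have "sqrt (norm2 d (mv d A x)) \<le> 1" using assms by linarith
  then have "norm2 d (mv d A x) \<le> 1" by simp
  moreover have "norm2 d (mv d A x) = (cmod (complex_of_real (1/s)))\<^sup>2 * norm2 d (mv d A z)"
    unfolding x_def mv_scale by (rule norm2_scale)
  then have "norm2 d (mv d A x) = norm2 d (mv d A z) / s\<^sup>2"
    using s pos by (simp add: norm_divide power_divide)
  ultimately show ?thesis using s pos by (simp add: divide_le_eq)
qed

lemma ip_bound: assumes "mat_op_norm d A \<le> 1"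
  shows "cmod (\<Sum>p<d. cnj (w p) * mv d A z p) \<le> sqrt (norm2 d w) * sqrt (norm2 d z)"
proof -
  have "cmod (\<Sum>p<d. cnj (w p) * mv d A z p) \<le> sqrt (norm2 d w) * sqrt (norm2 d (mv d A z))"
    using CS_c[of "\<lambda>p. cnj (w p)" "mv d A z" "{..<d}"] by (simp add: norm2_def)
  also have "\<dots> \<le> sqrt (norm2 d w) * sqrt (norm2 d z)"
    using op_use[OF assms, of z] by (simp add: mult_left_mono)
  finally show ?thesis .
qed




definition ipp :: "nat \<Rightarrow> nat \<Rightarrow> cmatrix \<Rightarrow> cmatrix \<Rightarrow> cmatrix \<Rightarrow> complex" where
  "ipp k n X W Z = (\<Sum>a<k. \<Sum>m<n. \<Sum>b<k. \<Sum>m'<n. cnj (W a m) * X (a*n+m) (b*n+m') * Z b m')"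
definition nrmp :: "nat \<Rightarrow> nat \<Rightarrow> cmatrix \<Rightarrow> real" where
  "nrmp k n W = (\<Sum>a<k. \<Sum>m<n. (cmod (W a m))\<^sup>2)"
definition vec :: "nat \<Rightarrow> cmatrix \<Rightarrow> nat \<Rightarrow> complex" where
  "vec n W = (\<lambda>p. W (p div n) (p mod n))"

lemma bridge_ip: assumes "n > 0"
  shows "ipp k n X W Z = (\<Sum>p<k*n. cnj (vec n W p) * mv (k*n) X (vec n Z) p)"
proof -
  have "(\<Sum>p<k*n. cnj (vec n W p) * mv (k*n) X (vec n Z) p)
     = (\<Sum>a<k. \<Sum>m<n. cnj (W a m) * (\<Sum>b<k. \<Sum>m'<n. X (a*n+m) (b*n+m') * Z b m'))"
    by (simp add: reindex mv_def vec_def assms)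
  also have "\<dots> = ipp k n X W Z"
    by (simp add: ipp_def sum_distrib_left mult.assoc)
  finally show ?thesis by simp
qed

lemma bridge_nrm: assumes "n > 0" shows "nrmp k n W = norm2 (k*n) (vec n W)"
  by (simp add: reindex norm2_def nrmp_def vec_def assms)

lemma ipp_bound: assumes "n > 0" "mat_op_norm (k*n) X \<le> 1"
  shows "cmod (ipp k n X W Z) \<le> sqrt (nrmp k n W) * sqrt (nrmp k n Z)"
  using ip_bound[OF assms(2), of "vec n W" "vec n Z"] by (simp add: bridge_ip bridge_nrm assms(1))

definition D :: "nat \<Rightarrow> (nat \<Rightarrow> complex) \<Rightarrow> cmatrix" where
  "D t x = (\<lambda>a m. if m = t then x a else 0)"

lemma ipp_add_l: "ipp k n X (\<lambda>a m. W1 a m + W2 a m) Z = ipp k n X W1 Z + ipp k n X W2 Z"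
  by (simp add: ipp_def ring_distribs sum.distrib)
lemma ipp_add_r: "ipp k n X W (\<lambda>a m. Z1 a m + Z2 a m) = ipp k n X W Z1 + ipp k n X W Z2"
  by (simp add: ipp_def ring_distribs sum.distrib)
lemma ipp_smult_l: "ipp k n X (\<lambda>a m. c * W a m) Z = cnj c * ipp k n X W Z"
  by (simp add: ipp_def sum_distrib_left mult.assoc)
lemma ipp_smult_r: "ipp k n X W (\<lambda>a m. c * Z a m) = c * ipp k n X W Z"
  by (simp add: ipp_def sum_distrib_left algebra_simps)

lemma ifz_mult: "(if P then a else 0) * b = (if P then a * b else (0::'a::mult_zero))" by simp
lemma mult_ifz: "b * (if P then a else 0) = (if P then b * a else (0::'a::mult_zero))" by simp
lemma sum_ifz: "(\<Sum>x\<in>S. if P then f x else 0) = (if P then (\<Sum>x\<in>S. f x) else 0)" by simp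
lemma cnj_ifz: "cnj (if P then a else 0) = (if P then cnj a else 0)" by simp

lemma ipp_D: assumes "t < n" "t' < n"
  shows "ipp k n X (D t x) (D t' y) = (\<Sum>a<k. \<Sum>b<k. cnj (x a) * X (a*n+t) (b*n+t') * y b)"
  unfolding ipp_def D_def using assms
  by (simp add: ifz_mult mult_ifz sum_ifz cnj_ifz sum.delta sum.delta' del: sum.delta_remove)

lemma sw1: "(\<Sum>s\<in>A. \<Sum>t\<in>B. \<Sum>a\<in>C. \<Sum>b\<in>E. f s t a b) = (\<Sum>a\<in>C. \<Sum>s\<in>A. \<Sum>b\<in>E. \<Sum>t\<in>B. f s t a b)"
proof -
  have "(\<Sum>s\<in>A. \<Sum>t\<in>B. \<Sum>a\<in>C. \<Sum>b\<in>E. f s t a b) = (\<Sum>s\<in>A. \<Sum>a\<in>C. \<Sum>t\<in>B. \<Sum>b\<in>E. f s t a b)"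
    by (rule sum.cong[OF refl], rule sum.swap)
  also have "\<dots> = (\<Sum>a\<in>C. \<Sum>s\<in>A. \<Sum>t\<in>B. \<Sum>b\<in>E. f s t a b)" by (rule sum.swap)
  also have "\<dots> = (\<Sum>a\<in>C. \<Sum>s\<in>A. \<Sum>b\<in>E. \<Sum>t\<in>B. f s t a b)"
    by (rule sum.cong[OF refl], rule sum.cong[OF refl], rule sum.swap)
  finally show ?thesis .
qed

definition T1 :: "nat \<Rightarrow> nat \<Rightarrow> cmatrix \<Rightarrow> cmatrix \<Rightarrow> cmatrix \<Rightarrow> complex" where
  "T1 k n X U V = (\<Sum>a<k. \<Sum>s<n. \<Sum>b<k. \<Sum>t<n. cnj (U a s) * X (a*n+t) (b*n+t) * V b s)"
definition T2 :: "nat \<Rightarrow> nat \<Rightarrow> cmatrix \<Rightarrow> cmatrix \<Rightarrow> cmatrix \<Rightarrow> complex" where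
  "T2 k n X U V = (\<Sum>a<k. \<Sum>s<n. \<Sum>b<k. \<Sum>t<n. cnj (U a s) * X (a*n+t) (b*n+s) * V b t)"

definition Aop :: "complex \<Rightarrow> nat \<Rightarrow> nat \<Rightarrow> cmatrix \<Rightarrow> cmatrix" where
  "Aop r s t W = (\<lambda>a m. D t (\<lambda>a. W a s) a m + r * D s (\<lambda>a. W a t) a m)"

lemma Aop_sum:
  "(\<Sum>s<n. \<Sum>t<n. ipp k n X (Aop r s t U) (Aop r s t V))
    = (1 + cnj r * r) * T1 k n X U V + (r + cnj r) * T2 k n X U V"
proof -
  let ?G = "\<lambda>s t. \<Sum>a<k. \<Sum>b<k. cnj (U a s) * X (a*n+t) (b*n+t) * V b s"
  let ?H = "\<lambda>s t. \<Sum>a<k. \<Sum>b<k. cnj (U a s) * X (a*n+t) (b*n+s) * V b t"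
  have e: "ipp k n X (Aop r s t U) (Aop r s t V) = ?G s t + r * ?H s t + cnj r * ?H t s + cnj r * r * ?G t s"
    if "s < n" "t < n" for s t
    using that by (simp add: Aop_def ipp_add_l ipp_add_r ipp_smult_l ipp_smult_r ipp_D algebra_simps)
  have "(\<Sum>s<n. \<Sum>t<n. ipp k n X (Aop r s t U) (Aop r s t V))
     = (\<Sum>s<n. \<Sum>t<n. ?G s t + r * ?H s t + cnj r * ?H t s + cnj r * r * ?G t s)"
    using e by (intro sum.cong refl) auto
  also have "\<dots> = (\<Sum>s<n. \<Sum>t<n. ?G s t) + r * (\<Sum>s<n. \<Sum>t<n. ?H s t)
     + cnj r * (\<Sum>s<n. \<Sum>t<n. ?H t s) + cnj r * r * (\<Sum>s<n. \<Sum>t<n. ?G t s)"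
    by (simp add: sum.distrib sum_distrib_left)
  also have "(\<Sum>s<n. \<Sum>t<n. ?H t s) = (\<Sum>s<n. \<Sum>t<n. ?H s t)" by (rule sum.swap)
  also have "(\<Sum>s<n. \<Sum>t<n. ?G t s) = (\<Sum>s<n. \<Sum>t<n. ?G s t)" by (rule sum.swap)
  also have "(\<Sum>s<n. \<Sum>t<n. ?G s t) = T1 k n X U V" unfolding T1_def by (rule sw1)
  also have "(\<Sum>s<n. \<Sum>t<n. ?H s t) = T2 k n X U V" unfolding T2_def by (rule sw1)
  finally show ?thesis by (simp add: algebra_simps)
qed




lemma nrm_point:
  fixes \<sigma> :: real
  assumes "\<sigma> = 1 \<or> \<sigma> = -1" "s < n" "t < n"
  shows "(\<Sum>m<n. (cmod (D t (\<lambda>a. W a s) b m + complex_of_real \<sigma> * D s (\<lambda>a. W a t) b m))\<^sup>2)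
      = (cmod (W b s))\<^sup>2 + (cmod (W b t))\<^sup>2 + (if s = t then 2 * \<sigma> * (cmod (W b s))\<^sup>2 else 0)"
proof (cases "s = t")
  case True
  have h1: "(\<lambda>m. (cmod (D t (\<lambda>a. W a s) b m + complex_of_real \<sigma> * D s (\<lambda>a. W a t) b m))\<^sup>2)
        = (\<lambda>m. if m = t then (cmod ((1 + complex_of_real \<sigma>) * W b t))\<^sup>2 else 0)"
    using True by (auto simp: D_def algebra_simps)
  have "(\<Sum>m<n. (cmod (D t (\<lambda>a. W a s) b m + complex_of_real \<sigma> * D s (\<lambda>a. W a t) b m))\<^sup>2)
       = (\<Sum>m<n. if m = t then (cmod ((1 + complex_of_real \<sigma>) * W b t))\<^sup>2 else 0)"
    by (subst h1) (rule refl)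
  also have "\<dots> = (cmod ((1 + complex_of_real \<sigma>) * W b t))\<^sup>2" using assms by simp
  also have "(cmod ((1 + complex_of_real \<sigma>) * W b t))\<^sup>2 = (1+\<sigma>)\<^sup>2 * (cmod (W b t))\<^sup>2"
    by (simp add: norm_mult power_mult_distrib) (metis of_real_1 of_real_add norm_of_real power2_abs)
  finally show ?thesis using True assms by (auto simp: power2_eq_square algebra_simps)
next
  case False
  have h: "(\<lambda>m. (cmod (D t (\<lambda>a. W a s) b m + complex_of_real \<sigma> * D s (\<lambda>a. W a t) b m))\<^sup>2)
        = (\<lambda>m. (if m = t then (cmod (W b s))\<^sup>2 else 0) + (if m = s then (cmod (W b t))\<^sup>2 else 0))"
    using False assms(1) by (auto simp: D_def norm_mult)
  show ?thesis by (subst h) (simp add: sum.distrib False assms)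
qed

lemma nrm_Aop:
  fixes \<sigma> :: real
  assumes "\<sigma> = 1 \<or> \<sigma> = -1"
  shows "(\<Sum>s<n. \<Sum>t<n. nrmp k n (Aop (complex_of_real \<sigma>) s t W)) = 2 * (real n + \<sigma>) * nrmp k n W"
proof -
  define N where "N = (\<Sum>s<n. \<Sum>b<k. (cmod (W b s))\<^sup>2)"
  have "(\<Sum>s<n. \<Sum>t<n. nrmp k n (Aop (complex_of_real \<sigma>) s t W))
      = (\<Sum>s<n. \<Sum>t<n. \<Sum>b<k. (cmod (W b s))\<^sup>2 + (cmod (W b t))\<^sup>2 + (if s = t then 2 * \<sigma> * (cmod (W b s))\<^sup>2 else 0))"
    unfolding nrmp_def Aop_def using nrm_point[OF assms] by (intro sum.cong refl) auto
  also have "\<dots> = (\<Sum>s<n. \<Sum>t<n. \<Sum>b<k. (cmod (W b s))\<^sup>2) + (\<Sum>s<n. \<Sum>t<n. \<Sum>b<k. (cmod (W b t))\<^sup>2)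
       + (\<Sum>s<n. \<Sum>t<n. \<Sum>b<k. (if s = t then 2 * \<sigma> * (cmod (W b s))\<^sup>2 else 0))"
    by (simp add: sum.distrib)
  also have "(\<Sum>s<n. \<Sum>t<n. \<Sum>b<k. (cmod (W b s))\<^sup>2) = real n * N"
    by (simp add: N_def sum_distrib_left)
  also have "(\<Sum>s<n. \<Sum>t<n. \<Sum>b<k. (cmod (W b t))\<^sup>2) = real n * N"
    by (simp add: N_def)
  also have "(\<Sum>s<n. \<Sum>t<n. \<Sum>b<k. (if s = t then 2 * \<sigma> * (cmod (W b s))\<^sup>2 else 0)) = 2 * \<sigma> * N"
    by (simp add: N_def sum_ifz sum.delta sum_distrib_left)
  also have "N = nrmp k n W" unfolding N_def nrmp_def by (rule sum.swap)
  finally show ?thesis by (simp add: algebra_simps)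
qed

lemma CS_r2:
  fixes a b :: "'i \<Rightarrow> 'j \<Rightarrow> real"
  assumes "\<And>s t. a s t \<ge> 0" "\<And>s t. b s t \<ge> 0" "finite A" "finite B"
  shows "(\<Sum>s\<in>A. \<Sum>t\<in>B. sqrt (a s t) * sqrt (b s t)) \<le> sqrt (\<Sum>s\<in>A. \<Sum>t\<in>B. a s t) * sqrt (\<Sum>s\<in>A. \<Sum>t\<in>B. b s t)"
  using CS_r[of "\<lambda>(s,t). a s t" "\<lambda>(s,t). b s t" "A \<times> B"] assms
  by (simp add: sum.cartesian_product split_def)

lemma Q_bound:
  fixes \<sigma> :: real
  assumes "\<sigma> = 1 \<or> \<sigma> = -1" "n > 0" "mat_op_norm (k*n) X \<le> 1"
  shows "cmod (T1 k n X U V + complex_of_real \<sigma> * T2 k n X U V) \<le> (real n + \<sigma>) * sqrt (nrmp k n U) * sqrt (nrmp k n V)"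
proof -
  let ?r = "complex_of_real \<sigma>"
  have r: "1 + cnj ?r * ?r = 2" "?r + cnj ?r = 2 * ?r" using assms(1) by auto
  have "2 * (T1 k n X U V + ?r * T2 k n X U V) = (\<Sum>s<n. \<Sum>t<n. ipp k n X (Aop ?r s t U) (Aop ?r s t V))"
    unfolding Aop_sum r by (simp add: algebra_simps)
  then have "2 * cmod (T1 k n X U V + ?r * T2 k n X U V) = cmod (\<Sum>s<n. \<Sum>t<n. ipp k n X (Aop ?r s t U) (Aop ?r s t V))"
    by (metis norm_mult norm_numeral)
  also have "\<dots> \<le> (\<Sum>s<n. \<Sum>t<n. cmod (ipp k n X (Aop ?r s t U) (Aop ?r s t V)))"
    by (rule order_trans[OF norm_sum]) (intro sum_mono norm_sum)
  also have "\<dots> \<le> (\<Sum>s<n. \<Sum>t<n. sqrt (nrmp k n (Aop ?r s t U)) * sqrt (nrmp k n (Aop ?r s t V)))"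
    by (intro sum_mono ipp_bound assms)
  also have "\<dots> \<le> sqrt (\<Sum>s<n. \<Sum>t<n. nrmp k n (Aop ?r s t U)) * sqrt (\<Sum>s<n. \<Sum>t<n. nrmp k n (Aop ?r s t V))"
    by (rule CS_r2) (auto simp: nrmp_def sum_nonneg)
  also have "\<dots> = sqrt (2 * (real n + \<sigma>) * nrmp k n U) * sqrt (2 * (real n + \<sigma>) * nrmp k n V)"
    by (simp add: nrm_Aop[OF assms(1)])
  also have "\<dots> = 2 * (real n + \<sigma>) * sqrt (nrmp k n U) * sqrt (nrmp k n V)"
  proof -
    have "real n + \<sigma> \<ge> 0" using assms by auto
    then show ?thesis by (simp add: real_sqrt_mult nrmp_def sum_nonneg)
  qed
  also have "\<dots> = 2 * ((real n + \<sigma>) * sqrt (nrmp k n U) * sqrt (nrmp k n V))" by (simp add: mult.assoc)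
  finally show ?thesis by linarith
qed




abbreviation Phi :: "nat \<Rightarrow> cmatrix \<Rightarrow> cmatrix" where
  "Phi n \<equiv> (\<lambda>x i j. HW_plus n x i j - HW_minus n x i j)"

lemma dm: "i < n \<Longrightarrow> (a*n+i) div n = a" "i < n \<Longrightarrow> (a*n+i) mod n = (i::nat)"
  by auto

lemma sum_lt_if: "(\<Sum>m<n. if m < n then f m else 0) = (\<Sum>m<n. f m)"
  by (rule sum.cong) auto

lemma Y_entry: assumes "i < n" "j < n"
  shows "ampl n (Phi n) X (a*n+i) (b*n+j)
    = ((if i = j then (\<Sum>m<n. X (a*n+m) (b*n+m)) else 0) + X (a*n+j) (b*n+i)) / (of_nat n + 1)
    - ((if i = j then (\<Sum>m<n. X (a*n+m) (b*n+m)) else 0) - X (a*n+j) (b*n+i)) / (of_nat n - 1)"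
  using assms by (simp add: ampl_def HW_plus_def HW_minus_def mtrace_def dm sum_lt_if)

lemma lin4: fixes f g :: "'a \<Rightarrow> 'b \<Rightarrow> 'c \<Rightarrow> 'd \<Rightarrow> complex"
  shows "(\<Sum>a\<in>A. \<Sum>i\<in>B. \<Sum>b\<in>C. \<Sum>j\<in>E. (f a i b j + g a i b j)/c - (f a i b j - g a i b j)/d)
   = ((\<Sum>a\<in>A. \<Sum>i\<in>B. \<Sum>b\<in>C. \<Sum>j\<in>E. f a i b j) + (\<Sum>a\<in>A. \<Sum>i\<in>B. \<Sum>b\<in>C. \<Sum>j\<in>E. g a i b j))/c
   - ((\<Sum>a\<in>A. \<Sum>i\<in>B. \<Sum>b\<in>C. \<Sum>j\<in>E. f a i b j) - (\<Sum>a\<in>A. \<Sum>i\<in>B. \<Sum>b\<in>C. \<Sum>j\<in>E. g a i b j))/d"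
proof -
  have e: "\<And>x y :: complex. (x+y)/c - (x-y)/d = x*(1/c-1/d) + y*(1/c+1/d)"
    by (simp add: diff_divide_distrib add_divide_distrib algebra_simps)
  show ?thesis unfolding e by (simp add: sum.distrib sum_distrib_right[symmetric])
qed

lemma ipp_Y: assumes "n \<ge> 2"
  shows "ipp k n (ampl n (Phi n) X) U V
     = (T1 k n X U V + T2 k n X U V) / (of_nat n + 1) - (T1 k n X U V - T2 k n X U V) / (of_nat n - 1)"
proof -
  define tr where "tr a b = (\<Sum>m<n. X (a*n+m) (b*n+m))" for a b
  define E1 where "E1 = (\<Sum>a<k. \<Sum>i<n. \<Sum>b<k. \<Sum>j<n. cnj (U a i) * (if i = j then tr a b else 0) * V b j)"
  have "ipp k n (ampl n (Phi n) X) U V = (\<Sum>a<k. \<Sum>i<n. \<Sum>b<k. \<Sum>j<n.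
      (cnj (U a i) * (if i = j then tr a b else 0) * V b j + cnj (U a i) * X (a*n+j) (b*n+i) * V b j) / (of_nat n + 1)
    - (cnj (U a i) * (if i = j then tr a b else 0) * V b j - cnj (U a i) * X (a*n+j) (b*n+i) * V b j) / (of_nat n - 1))"
    unfolding ipp_def by (intro sum.cong refl) (simp only: lessThan_iff Y_entry, simp add: tr_def algebra_simps diff_divide_distrib add_divide_distrib)
  also have "\<dots> = (E1 + T2 k n X U V) / (of_nat n + 1) - (E1 - T2 k n X U V) / (of_nat n - 1)"
    unfolding E1_def T2_def by (rule lin4)
  also have "E1 = T1 k n X U V"
    unfolding E1_def T1_def tr_def
    by (simp add: ifz_mult mult_ifz sum.delta sum.delta' sum_distrib_left sum_distrib_right mult.assoc)
  finally show ?thesis .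
qed

lemma upper_mat: assumes "n \<ge> 2" "mat_op_norm (k*n) X \<le> 1"
  shows "mat_op_norm (k*n) (ampl n (Phi n) X) \<le> 2"
proof (rule op_le)
  fix v
  let ?Y = "ampl n (Phi n) X"
  define u where "u = mv (k*n) ?Y v"
  define U where "U = (\<lambda>a i. u (a*n+i))"
  define V where "V = (\<lambda>a i. v (a*n+i))"
  have n0: "n > 0" using assms by auto
  have vU: "vec n U = u" "vec n V = v" by (auto simp: vec_def U_def V_def)
  have nU: "nrmp k n U = norm2 (k*n) u" and nV: "nrmp k n V = norm2 (k*n) v"
    using bridge_nrm[OF n0] vU by auto
  have "ipp k n ?Y U V = (\<Sum>p<k*n. cnj (u p) * u p)"
    using bridge_ip[OF n0] vU by (simp add: u_def)
  also have "\<dots> = complex_of_real (norm2 (k*n) u)"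
  proof -
    have "(\<Sum>p<k*n. cnj (u p) * u p) = (\<Sum>p<k*n. complex_of_real ((cmod (u p))\<^sup>2))"
      by (intro sum.cong refl) (simp only: complex_norm_square mult.commute)
    then show ?thesis by (simp add: norm2_def)
  qed
  finally have ip: "cmod (ipp k n ?Y U V) = norm2 (k*n) u" by simp
  let ?S = "sqrt (nrmp k n U) * sqrt (nrmp k n V)"
  have Q1: "cmod (T1 k n X U V + T2 k n X U V) \<le> (real n + 1) * ?S"
    using Q_bound[of 1 n k X U V] n0 assms(2) by (simp add: mult.assoc)
  have Q2: "cmod (T1 k n X U V - T2 k n X U V) \<le> (real n - 1) * ?S"
    using Q_bound[of "-1" n k X U V] n0 assms(2) by (simp add: mult.assoc)
  have "cmod (ipp k n ?Y U V) \<le> cmod (T1 k n X U V + T2 k n X U V) / (real n + 1) + cmod (T1 k n X U V - T2 k n X U V) / (real n - 1)"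
  proof -
    have a: "cmod (of_nat n + 1 :: complex) = real n + 1" by (metis of_nat_Suc norm_of_nat Suc_eq_plus1 of_nat_1 of_nat_add)
    have b: "cmod (of_nat n - 1 :: complex) = real n - 1"
    proof -
      have "(of_nat n - 1 :: complex) = of_real (real n - 1)" by simp
      then show ?thesis using assms(1) by (simp only: norm_of_real)
    qed
    show ?thesis unfolding ipp_Y[OF assms(1)]
      by (rule order_trans[OF norm_triangle_ineq4]) (simp add: norm_divide a b)
  qed
  also have "\<dots> \<le> ?S + ?S"
  proof -
    have "cmod (T1 k n X U V + T2 k n X U V) / (real n + 1) \<le> ?S"
      using Q1 by (simp add: divide_le_eq mult.commute)
    moreover have "cmod (T1 k n X U V - T2 k n X U V) / (real n - 1) \<le> ?S"
      using Q2 assms(1) by (simp add: divide_le_eq mult.commute)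
    ultimately show ?thesis by linarith
  qed
  finally have main: "norm2 (k*n) u \<le> 2 * sqrt (norm2 (k*n) u) * sqrt (norm2 (k*n) v)"
    using ip nU nV by simp
  show "norm2 (k*n) (mv (k*n) ?Y v) \<le> 2\<^sup>2 * norm2 (k*n) v"
  proof (cases "norm2 (k*n) u = 0")
    case True then show ?thesis by (simp add: u_def)
  next
    case False
    have pos: "sqrt (norm2 (k*n) u) > 0" using False norm2_nonneg[of "k*n" u] by (simp add: order_less_le)
    have "sqrt (norm2 (k*n) u) * sqrt (norm2 (k*n) u) \<le> sqrt (norm2 (k*n) u) * (2 * sqrt (norm2 (k*n) v))"
      using main by (simp add: algebra_simps)
    then have "sqrt (norm2 (k*n) u) \<le> 2 * sqrt (norm2 (k*n) v)" by (rule mult_left_le_imp_le[OF _ pos])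
    then have "(sqrt (norm2 (k*n) u))\<^sup>2 \<le> (2 * sqrt (norm2 (k*n) v))\<^sup>2"
      using pos by (intro power_mono) auto
    then show ?thesis by (simp add: u_def power_mult_distrib)
  qed
qed simp




lemma op_ge2: assumes "norm2 d z > 0" "c\<^sup>2 * norm2 d z \<le> norm2 d (mv d A z)" "c \<ge> 0"
  shows "c \<le> mat_op_norm d A"
proof -
  define s where "s = sqrt (norm2 d z)"
  have s: "s > 0" "s\<^sup>2 = norm2 d z" using assms by (auto simp: s_def)
  define x where "x = (\<lambda>j. complex_of_real (1/s) * z j)"
  have "norm2 d x = (cmod (complex_of_real (1/s)))\<^sup>2 * norm2 d z" unfolding x_def by (rule norm2_scale)
  then have "norm2 d x = 1" using s assms by (simp add: norm_divide power_divide)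
  then have le: "sqrt (norm2 d (mv d A x)) \<le> mat_op_norm d A" by (intro op_ge) simp
  have "norm2 d (mv d A x) = (cmod (complex_of_real (1/s)))\<^sup>2 * norm2 d (mv d A z)"
    unfolding x_def mv_scale by (rule norm2_scale)
  then have "norm2 d (mv d A x) = norm2 d (mv d A z) / s\<^sup>2"
    using s assms by (simp add: norm_divide power_divide)
  moreover have "c\<^sup>2 \<le> norm2 d (mv d A z) / s\<^sup>2" using assms s by (simp add: le_divide_eq)
  ultimately have "c\<^sup>2 \<le> norm2 d (mv d A x)" by simp
  then have "sqrt (c\<^sup>2) \<le> sqrt (norm2 d (mv d A x))" using real_sqrt_le_mono by blast
  then show ?thesis using le assms(3) by simp
qed

definition Fl :: "nat \<Rightarrow> cmatrix" where
  "Fl n = (\<lambda>p q. if q = (p mod n) * n + p div n then 1 else 0)"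

lemma lin_uniq: assumes "j < n" "a < n" shows "(b*n+j = i*n+a) = (b = i \<and> j = (a::nat))"
proof
  assume h: "b*n+j = i*n+a"
  have "(b*n+j) div n = (i*n+a) div n" "(b*n+j) mod n = (i*n+a) mod n" using h by simp_all
  then show "b = i \<and> j = a" using assms dm by metis
qed auto

lemma Fl_norm: assumes "n > 0" shows "mat_op_norm (n*n) (Fl n) \<le> 1"
proof (rule op_le)
  fix v
  have pn: "p mod n * n + p div n < n*n" if "p < n*n" for p
  proof -
    have "p div n < n" using that by (simp add: less_mult_imp_div_less)
    moreover have "p mod n < n" using assms by simp
    ultimately have "p mod n * n + p div n < p mod n * n + n" by simp
    also have "\<dots> = (p mod n + 1) * n" by simp
    also have "\<dots> \<le> n * n" using \<open>p mod n < n\<close> by (intro mult_right_mono) auto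
    finally show ?thesis .
  qed
  have "norm2 (n*n) (mv (n*n) (Fl n) v) = (\<Sum>p<n*n. (cmod (v (p mod n * n + p div n)))\<^sup>2)"
    unfolding norm2_def mv_def Fl_def using pn by (intro sum.cong refl) (simp add: ifz_mult sum.delta)
  also have "\<dots> = (\<Sum>a<n. \<Sum>i<n. (cmod (v (i * n + a)))\<^sup>2)" by (simp add: reindex dm)
  also have "\<dots> = (\<Sum>i<n. \<Sum>a<n. (cmod (v (i * n + a)))\<^sup>2)" by (rule sum.swap)
  also have "\<dots> = norm2 (n*n) v" by (simp add: reindex norm2_def)
  finally show "norm2 (n*n) (mv (n*n) (Fl n) v) \<le> 1\<^sup>2 * norm2 (n*n) v" by simp
qed simp

lemma Fl_blk: assumes "a<n" "b<n" "i<n" "j<n"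
  shows "Fl n (a*n+i) (b*n+j) = (if b = i \<and> j = a then 1 else 0)"
  using assms by (simp add: Fl_def dm lin_uniq)

lemma trF: assumes "a<n" "b<n" shows "(\<Sum>m<n. Fl n (a*n+m) (b*n+m)) = (if a = b then 1 else 0)"
proof -
  have "(\<Sum>m<n. Fl n (a*n+m) (b*n+m)) = (\<Sum>m<n. if m = a then (if a = b then 1 else 0) else 0)"
    using assms by (intro sum.cong refl) (auto simp add: Fl_blk)
  also have "\<dots> = (if a = b then 1 else 0)" using assms by simp
  finally show ?thesis .
qed

lemma YF_diag_sum: assumes "n \<ge> 2" "a < n" "i < n"
  shows "(\<Sum>b<n. ampl n (Phi n) (Fl n) (a*n+i) (b*n+b)) = (if i = a then 2 else 0)"
proof -
  have e: "ampl n (Phi n) (Fl n) (a*n+i) (b*n+b)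
     = ((if i = b \<and> a = b then 1 else 0) + (if i = a then 1 else 0)) / (of_nat n + 1)
     - ((if i = b \<and> a = b then 1 else 0) - (if i = a then 1 else 0)) / (of_nat n - 1)" if "b < n" for b
    using assms that by (simp only: Y_entry trF) (simp add: Fl_blk)
  have nz: "(of_nat n - 1 :: complex) \<noteq> 0" "(of_nat n + 1 :: complex) \<noteq> 0" using assms
    by (metis of_nat_1 of_nat_eq_iff right_minus_eq not_numeral_le_zero numeral_le_one_iff semiring_norm(69))
      (metis of_nat_Suc of_nat_eq_0_iff Suc_eq_plus1 nat.distinct(1) add.commute)
  show ?thesis
  proof (cases "i = a")
    case True
    have "(\<Sum>b<n. ampl n (Phi n) (Fl n) (a*n+i) (b*n+b))
       = (\<Sum>b<n. ((if b = a then 1 else 0) + 1) / (of_nat n + 1) - ((if b = a then 1 else 0) - 1) / (of_nat n - 1))"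
      using e True by (intro sum.cong refl) auto
    also have "\<dots> = (1 + of_nat n) / (of_nat n + 1) - (1 - of_nat n) / (of_nat n - 1)"
      using assms by (simp add: sum_subtractf sum_divide_distrib[symmetric] sum.distrib sum.delta)
    also have "\<dots> = 2" using nz by (simp add: field_simps)
    finally show ?thesis using True by simp
  next
    case False
    have "(\<Sum>b<n. ampl n (Phi n) (Fl n) (a*n+i) (b*n+b)) = (\<Sum>b<n. 0)"
      using e False by (intro sum.cong refl) auto
    then show ?thesis using False by simp
  qed
qed




lemma lower_mat: assumes "n \<ge> 2" shows "2 \<le> mat_op_norm (n*n) (ampl n (Phi n) (Fl n))"
proof -
  let ?Y = "ampl n (Phi n) (Fl n)"
  define z where "z = (\<lambda>p::nat. if p div n = p mod n then (1::complex) else 0)"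
  have n0: "n > 0" using assms by auto
  have mvz: "mv (n*n) ?Y z p = 2 * z p" if "p < n*n" for p
  proof -
    have pd: "p div n < n" using that by (simp add: less_mult_imp_div_less)
    have pm: "p mod n < n" using n0 by simp
    have "mv (n*n) ?Y z p = (\<Sum>b<n. \<Sum>j<n. ?Y p (b*n+j) * (if b = j then 1 else 0))"
      unfolding mv_def z_def by (simp add: reindex dm)
    also have "\<dots> = (\<Sum>b<n. ?Y p (b*n+b))"
      by (intro sum.cong refl) (simp add: mult_ifz sum.delta)
    also have "\<dots> = (\<Sum>b<n. ?Y (p div n * n + p mod n) (b*n+b))" by simp
    also have "\<dots> = (if p mod n = p div n then 2 else 0)" by (rule YF_diag_sum[OF assms pd pm])
    finally show ?thesis by (auto simp: z_def)
  qed
  have "norm2 (n*n) (mv (n*n) ?Y z) = (\<Sum>p<n*n. (cmod (2 * z p))\<^sup>2)"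
    unfolding norm2_def using mvz by (intro sum.cong refl) auto
  also have "\<dots> = 2\<^sup>2 * norm2 (n*n) z" by (simp add: norm2_def norm_mult power_mult_distrib sum_distrib_left)
  finally have eq: "norm2 (n*n) (mv (n*n) ?Y z) = 2\<^sup>2 * norm2 (n*n) z" .
  have "(cmod (z 0))\<^sup>2 \<le> norm2 (n*n) z" unfolding norm2_def
    by (rule member_le_sum) (use n0 in auto)
  then have "norm2 (n*n) z > 0" by (simp add: z_def)
  then show ?thesis using eq by (intro op_ge2) auto
qed

lemma ampl_upper: assumes "n \<ge> 2" shows "ampl_norm k n (Phi n) \<le> 2"
  unfolding ampl_norm_def
proof (rule cSup_least)
  have "mat_op_norm (k*n) (\<lambda>_ _. 0) \<le> 1" by (rule op_le) (auto simp: mv_def norm2_def sum_nonneg)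
  then show "{mat_op_norm (k * n) (ampl n (Phi n) X) |X. mat_op_norm (k * n) X \<le> 1} \<noteq> {}" by blast
next
  fix x assume "x \<in> {mat_op_norm (k * n) (ampl n (Phi n) X) |X. mat_op_norm (k * n) X \<le> 1}"
  then show "x \<le> 2" using upper_mat[OF assms] by blast
qed

lemma ampl_nn: assumes "n \<ge> 2" shows "ampl_norm n n (Phi n) = 2"
proof (rule antisym)
  show "ampl_norm n n (Phi n) \<le> 2" by (rule ampl_upper[OF assms])
  have "bdd_above {mat_op_norm (n * n) (ampl n (Phi n) X) |X. mat_op_norm (n * n) X \<le> 1}"
    using upper_mat[OF assms] by (intro bdd_aboveI[of _ 2]) blast
  moreover have "mat_op_norm (n*n) (Fl n) \<le> 1" using Fl_norm assms by simp
  ultimately have "mat_op_norm (n*n) (ampl n (Phi n) (Fl n)) \<le> ampl_norm n n (Phi n)"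
    unfolding ampl_norm_def by (intro cSup_upper) blast+
  then show "2 \<le> ampl_norm n n (Phi n)" using lower_mat[OF assms] by linarith
qed

theorem lemma4p8:
  fixes n :: nat
  assumes "n \<ge> 2"
  shows "cb_norm n (\<lambda>x i j. HW_plus n x i j - HW_minus n x i j) = 2"
  unfolding cb_norm_def
proof (rule antisym)
  show "(SUP k\<in>{1..}. ereal (ampl_norm k n (Phi n))) \<le> 2"
    using ampl_upper[OF assms] by (intro SUP_least) simp
  have "n \<in> {1..}" using assms by simp
  then have "ereal (ampl_norm n n (Phi n)) \<le> (SUP k\<in>{1..}. ereal (ampl_norm k n (Phi n)))"
    by (rule SUP_upper)
  then show "2 \<le> (SUP k\<in>{1..}. ereal (ampl_norm k n (Phi n)))" using ampl_nn[OF assms] by simp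
qed


end
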